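(* Let $\mathcal{G}$ be an $N$-player continuous concave game with pseudo-gradient $U$ (setting in the context). For each player $p$ let $\vartheta^p$ satisfy the regularizer assumption (with strong convexity constant $\rho>0$), let $\epsilon>0$, let $C_\epsilon=(C^p_\epsilon)_{p}$ be the induced mirror map, and let $h(x)=\sum_{p}\vartheta^p(x^p)$ with Bregman divergence $D_h$. Suppose $\mathcal{G}$ is $\mu$-relatively hypo-monotone with respect to $h$, and suppose $\overline x=(\overline x^p)_p\in\mathrm{relint}(\Omega)$ is the unique interior perturbed Nash equilibrium, i.e. $\overline x=C_\epsilon(U(\overline x))$. Let $\gamma>0$, $\epsilon>\mu$, $z(0)\in\mathbb{R}^n$, and let $z(t)$ solve the discounted mirror descent dynamics $\dot z=\gamma(-z+U(x))$, $x=C_\epsilon(z)$, with $x(t)=C_\epsilon(z(t))$ and $x_0=x(0)=C_\epsilon(z(0))$. Then $x(t)\to\overline x$ with $$D_h(\overline x,x(t))\le e^{-\gamma(\epsilon-\mu)\epsilon^{-1}t}D_h(\overline x,x_0),$$ and $$\|\overline x-x(t)\|_2^2\le 2\rho^{-1}e^{-\gamma(\epsilon-\mu)\epsilon^{-1}t}D_h(\overline x,x_0).$$ In particular, for $\mu=0$ (the null monotone case, $(U(x)-U(x'))^\top(x-x')=0$ for all $x,x'$), $\|\overline x-x(t)\|_2^2\le 2\rho^{-1}e^{-\gamma t}D_h(\overline x,x_0)$.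
   Context: Game setting: players $\mathcal{N}=\{1,\dots,N\}$; strategy sets $\Omega^p\subseteq\mathbb{R}^{n_p}$ nonempty, compact, convex; $\Omega=\prod_p\Omega^p\subseteq\mathbb{R}^n$; payoffs $\mathcal{U}^p:\Omega\to\mathbb{R}$ jointly continuous, concave and continuously differentiable in $x^p$ for each fixed $x^{-p}$; pseudo-gradient $U(x)=(\nabla_{x^p}\mathcal{U}^p(x))_p$, assumed $L$-Lipschitz on $\Omega$. Regularizer assumption: $\vartheta^p:\mathbb{R}^{n_p}\to\mathbb{R}\cup\{\infty\}$ closed, proper, $\rho$-strongly convex (Euclidean norm), $\mathrm{dom}(\vartheta^p)=\Omega^p$. Mirror map: $C^p_\epsilon(z^p)=\arg\max_{y^p\in\Omega^p}[{y^p}^\top z^p-\epsilon\vartheta^p(y^p)]$. A perturbed NE $\overline x=C_\epsilon(U(\overline x))$ is a Nash equilibrium of the game with payoffs $\mathcal{U}^p-\epsilon\vartheta^p$. Bregman divergence $D_h(x,y)=h(x)-h(y)-\nabla h(y)^\top(x-y)$; $\mathrm{dom}(\partial h)=\{x:\partial h(x)\ne\varnothing\}$. $\mathcal{G}$ is $\mu$-relatively hypo-monotone w.r.t. $h$ if $(U(x)-U(x'))^\top(x-x')\le\mu(D_h(x,x')+D_h(x',x))$ for all $x,x'\in\mathrm{dom}(\partial h)$. *)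

theory Defs
  imports "HOL-Analysis.Analysis"
begin

text \<open>Players are a finite type 'p; blk i is the player owning coordinate i.
  Player p's space R^{n_p} is identified with the coordinate subspace
  block_space blk p; x^p is proj_blk blk p x.\<close>

definition block_space :: "('c::finite \<Rightarrow> 'p) \<Rightarrow> 'p \<Rightarrow> (real^'c) set" where
  "block_space blk p = {v. \<forall>i. blk i \<noteq> p \<longrightarrow> v $ i = 0}"

definition proj_blk :: "('c::finite \<Rightarrow> 'p) \<Rightarrow> 'p \<Rightarrow> real^'c \<Rightarrow> real^'c" where
  "proj_blk blk p x = (\<chi> i. if blk i = p then x $ i else 0)"

definition upd_blk :: "('c::finite \<Rightarrow> 'p) \<Rightarrow> real^'c \<Rightarrow> 'p \<Rightarrow> real^'c \<Rightarrow> real^'c" where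
  "upd_blk blk x p y = (\<chi> i. if blk i = p then y $ i else x $ i)"

definition joint_set :: "('c::finite \<Rightarrow> 'p) \<Rightarrow> ('p \<Rightarrow> (real^'c) set) \<Rightarrow> (real^'c) set" where
  "joint_set blk \<Omega>p = {x. \<forall>p. proj_blk blk p x \<in> \<Omega>p p}"

definition concave_game ::
  "('c::finite \<Rightarrow> 'p) \<Rightarrow> ('p \<Rightarrow> (real^'c) set) \<Rightarrow> ('p \<Rightarrow> real^'c \<Rightarrow> real)
    \<Rightarrow> (real^'c \<Rightarrow> real^'c) \<Rightarrow> real \<Rightarrow> bool" where
  "concave_game blk \<Omega>p Upay U L \<longleftrightarrow>
     (\<forall>p. \<Omega>p p \<subseteq> block_space blk p \<and> \<Omega>p p \<noteq> {} \<and> compact (\<Omega>p p) \<and> convex (\<Omega>p p)) \<and>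
     (\<forall>p. continuous_on (joint_set blk \<Omega>p) (Upay p)) \<and>
     (\<forall>p. \<forall>x\<in>joint_set blk \<Omega>p. concave_on (\<Omega>p p) (\<lambda>y. Upay p (upd_blk blk x p y))) \<and>
     (\<forall>p. \<forall>x\<in>joint_set blk \<Omega>p. \<forall>y\<in>\<Omega>p p.
        ((\<lambda>y'. Upay p (upd_blk blk x p y')) has_derivative
           (\<lambda>v. proj_blk blk p (U (upd_blk blk x p y)) \<bullet> v)) (at y within \<Omega>p p)) \<and>
     L-lipschitz_on (joint_set blk \<Omega>p) U"

text \<open>Regularizer assumption. theta is real valued on its domain Omega^p (the extended
  function is +infinity outside Omega^p); closedness = closed sublevel sets on Omega^p;
  rho-strong convexity w.r.t. the Euclidean norm.\<close>
definition regularizer :: "(real^'c::finite) set \<Rightarrow> (real^'c \<Rightarrow> real) \<Rightarrow> real \<Rightarrow> bool" where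
  "regularizer \<Omega> \<theta> \<rho> \<longleftrightarrow>
     (\<forall>c. closed {y\<in>\<Omega>. \<theta> y \<le> c}) \<and>
     (\<forall>x\<in>\<Omega>. \<forall>y\<in>\<Omega>. \<forall>s::real. 0 \<le> s \<and> s \<le> 1 \<longrightarrow>
        \<theta> (s *\<^sub>R x + (1 - s) *\<^sub>R y)
          \<le> s * \<theta> x + (1 - s) * \<theta> y - \<rho> / 2 * s * (1 - s) * (norm (x - y))\<^sup>2)"

definition mirror_p :: "(real^'c::finite) set \<Rightarrow> (real^'c \<Rightarrow> real) \<Rightarrow> real \<Rightarrow> real^'c \<Rightarrow> real^'c" where
  "mirror_p \<Omega> \<theta> \<epsilon> zp =
     (THE y. y \<in> \<Omega> \<and> (\<forall>y'\<in>\<Omega>. y' \<bullet> zp - \<epsilon> * \<theta> y' \<le> y \<bullet> zp - \<epsilon> * \<theta> y))"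

definition mirror :: "('c::finite \<Rightarrow> 'p) \<Rightarrow> ('p \<Rightarrow> (real^'c) set) \<Rightarrow> ('p \<Rightarrow> real^'c \<Rightarrow> real)
    \<Rightarrow> real \<Rightarrow> real^'c \<Rightarrow> real^'c" where
  "mirror blk \<Omega>p \<theta> \<epsilon> z =
     (\<chi> i. mirror_p (\<Omega>p (blk i)) (\<theta> (blk i)) \<epsilon> (proj_blk blk (blk i) z) $ i)"

definition hsum :: "('c::finite \<Rightarrow> 'p::finite) \<Rightarrow> ('p \<Rightarrow> real^'c \<Rightarrow> real) \<Rightarrow> real^'c \<Rightarrow> real" where
  "hsum blk \<theta> x = (\<Sum>p\<in>UNIV. \<theta> p (proj_blk blk p x))"

text \<open>Subdifferential of the extended function (h on Omega, +infinity outside).\<close>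
definition subgrad :: "(real^'c::finite) set \<Rightarrow> (real^'c \<Rightarrow> real) \<Rightarrow> real^'c \<Rightarrow> (real^'c) set" where
  "subgrad \<Omega> h y = {g. y \<in> \<Omega> \<and> (\<forall>x\<in>\<Omega>. h y + g \<bullet> (x - y) \<le> h x)}"

definition bregman :: "(real^'c::finite \<Rightarrow> real) \<Rightarrow> real^'c \<Rightarrow> real^'c \<Rightarrow> real^'c \<Rightarrow> real" where
  "bregman h x y g = h x - h y - g \<bullet> (x - y)"

definition rel_hypo_monotone :: "(real^'c::finite) set \<Rightarrow> (real^'c \<Rightarrow> real) \<Rightarrow> (real^'c \<Rightarrow> real^'c) \<Rightarrow> real \<Rightarrow> bool" where
  "rel_hypo_monotone \<Omega> h U \<mu> \<longleftrightarrow>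
     (\<forall>x x' g g'. g \<in> subgrad \<Omega> h x \<longrightarrow> g' \<in> subgrad \<Omega> h x' \<longrightarrow>
        (U x - U x') \<bullet> (x - x') \<le> \<mu> * (bregman h x x' g' + bregman h x' x g))"

end

theory Submission
  imports Defs
begin


lemma subgrad_C:
  assumes H1: "C z \<in> K" "\<forall>y\<in>K. y \<bullet> z - \<epsilon> * h y \<le> C z \<bullet> z - \<epsilon> * h (C z)"
    and e: "\<epsilon> > 0"
  shows "(1/\<epsilon>) *\<^sub>R z \<in> subgrad K h (C z)"
  unfolding subgrad_def
proof (intro CollectI conjI ballI)
  show "C z \<in> K" by fact
  fix y assume y: "y \<in> K"
  have 1: "((1/\<epsilon>) *\<^sub>R z) \<bullet> (y - C z) = (y \<bullet> z - C z \<bullet> z) / \<epsilon>"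
    by (simp add: inner_diff_right inner_commute)
  have 2: "y \<bullet> z - C z \<bullet> z \<le> \<epsilon> * (h y - h (C z))"
    using H1(2) y by (simp add: algebra_simps)
  have "(y \<bullet> z - C z \<bullet> z) / \<epsilon> \<le> h y - h (C z)"
    using 2 e by (simp add: divide_le_eq mult.commute)
  then show "h (C z) + ((1/\<epsilon>) *\<^sub>R z) \<bullet> (y - C z) \<le> h y" using 1 by linarith
qed

lemma breg_strong:
  fixes h :: "real^'c::finite \<Rightarrow> real"
  assumes cK: "convex K"
    and H2: "\<And>x y s. x \<in> K \<Longrightarrow> y \<in> K \<Longrightarrow> 0 \<le> s \<Longrightarrow> s \<le> 1 \<Longrightarrow>
       h (s *\<^sub>R x + (1 - s) *\<^sub>R y) \<le> s * h x + (1 - s) * h y - \<rho> / 2 * s * (1 - s) * (norm (x - y))\<^sup>2"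
    and g: "g \<in> subgrad K h x" and y: "y \<in> K" and rho: "\<rho> > 0"
  shows "bregman h y x g \<ge> \<rho>/2 * (norm (y - x))\<^sup>2"
proof -
  have x: "x \<in> K" using g by (simp add: subgrad_def)
  define a where "a = \<rho>/2 * (norm (y - x))\<^sup>2"
  define B where "B = bregman h y x g"
  have a0: "a \<ge> 0" using rho by (simp add: a_def)
  have key: "a - s * a \<le> B" if s: "0 < s" "s \<le> 1" for s
  proof -
    define p where "p = s *\<^sub>R y + (1 - s) *\<^sub>R x"
    have pK: "p \<in> K" using cK x y s unfolding p_def by (simp add: convexD)
    have lo: "h x + g \<bullet> (p - x) \<le> h p" using g pK by (simp add: subgrad_def)
    have px: "p - x = s *\<^sub>R (y - x)" by (simp add: p_def algebra_simps)
    have up: "h p \<le> s * h y + (1 - s) * h x - \<rho> / 2 * s * (1 - s) * (norm (y - x))\<^sup>2"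
      unfolding p_def using H2[OF y x] s by simp
    have "s * (g \<bullet> (y - x)) \<le> s * (h y - h x) - s * ((1 - s) * a)"
      using lo up px by (simp add: a_def algebra_simps)
    then have "s * (g \<bullet> (y - x)) \<le> s * (h y - h x - (1 - s) * a)"
      by (simp add: algebra_simps)
    then have "g \<bullet> (y - x) \<le> h y - h x - (1 - s) * a"
      using s by simp
    then show ?thesis by (simp add: B_def bregman_def algebra_simps)
  qed
  have "a \<le> B"
  proof (rule field_le_epsilon)
    fix e :: real assume e: "0 < e"
    define s where "s = min 1 (e / (a + 1))"
    have s0: "0 < s" "s \<le> 1" using e a0 by (auto simp: s_def)
    have "s \<le> e / (a + 1)" by (simp add: s_def)
    then have "s * a \<le> e / (a + 1) * a" using a0 by (rule mult_right_mono)
    also have "\<dots> \<le> e" using a0 e by (simp add: field_simps)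
    finally show "a \<le> B + e" using key[OF s0] by linarith
  qed
  then show ?thesis by (simp add: a_def B_def)
qed

lemma C_lip:
  fixes h :: "real^'c::finite \<Rightarrow> real" and C :: "real^'c \<Rightarrow> real^'c"
  assumes cK: "convex K"
    and H1a: "\<And>z. C z \<in> K"
    and H1b: "\<And>z y. y \<in> K \<Longrightarrow> y \<bullet> z - \<epsilon> * h y \<le> C z \<bullet> z - \<epsilon> * h (C z)"
    and H2: "\<And>x y s. x \<in> K \<Longrightarrow> y \<in> K \<Longrightarrow> 0 \<le> s \<Longrightarrow> s \<le> 1 \<Longrightarrow>
       h (s *\<^sub>R x + (1 - s) *\<^sub>R y) \<le> s * h x + (1 - s) * h y - \<rho> / 2 * s * (1 - s) * (norm (x - y))\<^sup>2"
    and rho: "\<rho> > 0" and e: "\<epsilon> > 0"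
  shows "norm (C z - C w) \<le> norm (z - w) / (\<epsilon> * \<rho>)"
proof -
  have gz: "(1/\<epsilon>) *\<^sub>R z \<in> subgrad K h (C z)" by (rule subgrad_C) (use H1a H1b e in auto)
  have gw: "(1/\<epsilon>) *\<^sub>R w \<in> subgrad K h (C w)" by (rule subgrad_C) (use H1a H1b e in auto)
  define n where "n = norm (C z - C w)"
  have b1: "bregman h (C w) (C z) ((1/\<epsilon>) *\<^sub>R z) \<ge> \<rho>/2 * n\<^sup>2"
    using breg_strong[OF cK H2 gz H1a rho] by (simp add: n_def norm_minus_commute)
  have b2: "bregman h (C z) (C w) ((1/\<epsilon>) *\<^sub>R w) \<ge> \<rho>/2 * n\<^sup>2"
    using breg_strong[OF cK H2 gw H1a rho] by (simp add: n_def)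
  have sum: "bregman h (C w) (C z) ((1/\<epsilon>) *\<^sub>R z) + bregman h (C z) (C w) ((1/\<epsilon>) *\<^sub>R w)
     = ((z - w) \<bullet> (C z - C w)) / \<epsilon>"
    using e unfolding bregman_def by (simp add: inner_diff_left inner_diff_right inner_commute diff_divide_distrib add_divide_distrib)
  have "(z - w) \<bullet> (C z - C w) \<le> norm (z - w) * n" unfolding n_def by (rule norm_cauchy_schwarz)
  then have "\<rho> * n\<^sup>2 \<le> norm (z - w) * n / \<epsilon>"
  proof -
    have "\<rho> * n\<^sup>2 \<le> ((z - w) \<bullet> (C z - C w)) / \<epsilon>" using b1 b2 sum by linarith
    also have "\<dots> \<le> norm (z - w) * n / \<epsilon>" using e \<open>(z - w) \<bullet> (C z - C w) \<le> norm (z - w) * n\<close>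
      by (simp add: divide_right_mono)
    finally show ?thesis .
  qed
  then have "\<epsilon> * \<rho> * n\<^sup>2 \<le> norm (z - w) * n" using e by (simp add: field_simps)
  then have "\<epsilon> * \<rho> * n \<le> norm (z - w)" if "n > 0"
    using that by (simp add: power2_eq_square mult.assoc[symmetric])
  moreover have "n \<ge> 0" by (simp add: n_def)
  ultimately have "\<epsilon> * \<rho> * n \<le> norm (z - w)"
    by (cases "n = 0") auto
  then show ?thesis using e rho by (simp add: n_def field_simps)
qed

lemma phi_deriv:
  fixes h :: "real^'c::finite \<Rightarrow> real" and C :: "real^'c \<Rightarrow> real^'c"
  assumes cK: "convex K"
    and H1a: "\<And>z. C z \<in> K"
    and H1b: "\<And>z y. y \<in> K \<Longrightarrow> y \<bullet> z - \<epsilon> * h y \<le> C z \<bullet> z - \<epsilon> * h (C z)"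
    and H2: "\<And>x y s. x \<in> K \<Longrightarrow> y \<in> K \<Longrightarrow> 0 \<le> s \<Longrightarrow> s \<le> 1 \<Longrightarrow>
       h (s *\<^sub>R x + (1 - s) *\<^sub>R y) \<le> s * h x + (1 - s) * h y - \<rho> / 2 * s * (1 - s) * (norm (x - y))\<^sup>2"
    and rho: "\<rho> > 0" and e: "\<epsilon> > 0"
  shows "((\<lambda>w. C w \<bullet> w - \<epsilon> * h (C w)) has_derivative (\<lambda>v. C z \<bullet> v)) (at z)"
proof -
  define \<phi> where "\<phi> = (\<lambda>w. C w \<bullet> w - \<epsilon> * h (C w))"
  have bnd: "norm (\<phi> w - \<phi> z - C z \<bullet> (w - z)) \<le> norm (w - z) * (norm (w - z) / (\<epsilon> * \<rho>))" for w
  proof -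
    have lo: "0 \<le> \<phi> w - \<phi> z - C z \<bullet> (w - z)"
      using H1b[OF H1a, of z w] by (simp add: \<phi>_def inner_diff_right inner_commute)
    have up: "\<phi> w - \<phi> z - C z \<bullet> (w - z) \<le> (C w - C z) \<bullet> (w - z)"
      using H1b[OF H1a, of w z] by (simp add: \<phi>_def inner_diff_right inner_diff_left inner_commute)
    have "(C w - C z) \<bullet> (w - z) \<le> norm (C w - C z) * norm (w - z)" by (rule norm_cauchy_schwarz)
    also have "\<dots> \<le> (norm (w - z) / (\<epsilon> * \<rho>)) * norm (w - z)"
      using C_lip[OF cK H1a H1b H2 rho e, of w z] by (intro mult_right_mono) auto
    finally show ?thesis using lo up by (simp add: mult.commute)
  qed
  have "((\<lambda>w. norm (\<phi> w - \<phi> z - C z \<bullet> (w - z)) / norm (w - z)) \<longlongrightarrow> 0) (at z)"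
  proof (rule Lim_null_comparison)
    show "\<forall>\<^sub>F w in at z. norm (norm (\<phi> w - \<phi> z - C z \<bullet> (w - z)) / norm (w - z)) \<le> norm (w - z) / (\<epsilon> * \<rho>)"
    proof (rule always_eventually, rule allI)
      fix w
      show "norm (norm (\<phi> w - \<phi> z - C z \<bullet> (w - z)) / norm (w - z)) \<le> norm (w - z) / (\<epsilon> * \<rho>)"
      proof (cases "w = z")
        case True then show ?thesis using e rho by simp
      next
        case False
        then have np: "norm (w - z) > 0" by simp
        show ?thesis using bnd[of w] np by (simp add: divide_le_eq mult.commute)
      qed
    qed
    show "((\<lambda>w. norm (w - z) / (\<epsilon> * \<rho>)) \<longlongrightarrow> 0) (at z)"
      using e rho by (auto intro!: tendsto_eq_intros)
  qed
  then show ?thesis unfolding \<phi>_def[symmetric]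
    by (subst has_derivative_iff_norm) (simp add: bounded_linear_inner_right)
qed

lemma abstract_main:
  fixes h :: "real^'c::finite \<Rightarrow> real" and C U :: "real^'c \<Rightarrow> real^'c" and z :: "real \<Rightarrow> real^'c"
  assumes cK: "convex K"
    and H1a: "\<And>z. C z \<in> K"
    and H1b: "\<And>z y. y \<in> K \<Longrightarrow> y \<bullet> z - \<epsilon> * h y \<le> C z \<bullet> z - \<epsilon> * h (C z)"
    and H2: "\<And>x y s. x \<in> K \<Longrightarrow> y \<in> K \<Longrightarrow> 0 \<le> s \<Longrightarrow> s \<le> 1 \<Longrightarrow>
       h (s *\<^sub>R x + (1 - s) *\<^sub>R y) \<le> s * h x + (1 - s) * h y - \<rho> / 2 * s * (1 - s) * (norm (x - y))\<^sup>2"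
    and rho: "\<rho> > 0" and e: "\<epsilon> > 0" and gam: "\<gamma> > 0" and em: "\<epsilon> > \<mu>"
    and hypo: "rel_hypo_monotone K h U \<mu>"
    and xne: "xbar = C (U xbar)"
    and ode: "\<And>t. t \<ge> 0 \<Longrightarrow>
       (z has_vector_derivative (\<gamma> *\<^sub>R (- z t + U (C (z t))))) (at t within {0..})"
    and t: "t \<ge> 0"
  shows "bregman h xbar (C (z t)) ((1/\<epsilon>) *\<^sub>R z t)
     \<le> exp (- \<gamma> * (\<epsilon> - \<mu>) / \<epsilon> * t) * bregman h xbar (C (z 0)) ((1/\<epsilon>) *\<^sub>R z 0)"
proof -
  define V where "V s = bregman h xbar (C (z s)) ((1/\<epsilon>) *\<^sub>R z s)" for s
  define k where "k = \<gamma> * (\<epsilon> - \<mu>) / \<epsilon>"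
  define \<phi> where "\<phi> = (\<lambda>w. C w \<bullet> w - \<epsilon> * h (C w))"
  define D where "D s = ((C (z s) - xbar) \<bullet> (\<gamma> *\<^sub>R (- z s + U (C (z s))))) / \<epsilon>" for s
  have xK: "xbar \<in> K" using H1a xne by metis
  have Veq: "V = (\<lambda>s. h xbar + (\<phi> (z s) - z s \<bullet> xbar) / \<epsilon>)"
  proof
    fix s show "V s = h xbar + (\<phi> (z s) - z s \<bullet> xbar) / \<epsilon>"
      using e unfolding V_def \<phi>_def bregman_def
      by (simp add: inner_diff_right inner_commute diff_divide_distrib)
  qed
  have dV: "(V has_real_derivative D s) (at s within {0..})" if s: "s \<ge> 0" for s
  proof -
    let ?z' = "\<gamma> *\<^sub>R (- z s + U (C (z s)))"
    have dz: "(z has_derivative (\<lambda>r. r *\<^sub>R ?z')) (at s within {0..})"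
      using ode[OF s] by (simp add: has_vector_derivative_def)
    have dphi: "(\<phi> has_derivative (\<lambda>v. C (z s) \<bullet> v)) (at (z s))"
      unfolding \<phi>_def by (rule phi_deriv[OF cK H1a H1b H2 rho e])
    have d1: "((\<lambda>r. \<phi> (z r)) has_real_derivative (C (z s) \<bullet> ?z')) (at s within {0..})"
      unfolding has_field_derivative_def
      by (rule has_derivative_eq_rhs[OF has_derivative_compose[OF dz dphi]])
         (auto simp: inner_scaleR_right mult.commute)
    have d2: "((\<lambda>r. z r \<bullet> xbar) has_real_derivative (?z' \<bullet> xbar)) (at s within {0..})"
      unfolding has_field_derivative_def
      by (rule has_derivative_eq_rhs[OF bounded_linear.has_derivative[OF bounded_linear_inner_left dz]])
         (auto simp: inner_scaleR_left mult.commute)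
    have "((\<lambda>s. h xbar + (\<phi> (z s) - z s \<bullet> xbar) / \<epsilon>) has_real_derivative
        (0 + (C (z s) \<bullet> ?z' - ?z' \<bullet> xbar) / \<epsilon>)) (at s within {0..})"
      by (intro DERIV_add DERIV_const DERIV_cdivide DERIV_diff d1 d2)
    moreover have "0 + (C (z s) \<bullet> ?z' - ?z' \<bullet> xbar) / \<epsilon> = D s"
      by (simp only: D_def inner_diff_left inner_commute[of xbar] add_0_left)
    ultimately show ?thesis unfolding Veq by simp
  qed
  have ineq: "D s \<le> - k * V s" for s
  proof -
    define x where "x = C (z s)"
    define zz where "zz = z s"
    define gb where "gb = (1/\<epsilon>) *\<^sub>R U xbar"
    define g where "g = (1/\<epsilon>) *\<^sub>R zz"
    have xK': "x \<in> K" by (simp add: x_def H1a)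
    have gb: "gb \<in> subgrad K h xbar"
      unfolding gb_def by (subst (2) xne, rule subgrad_C) (use H1a H1b e in auto)
    have g: "g \<in> subgrad K h x"
      unfolding g_def x_def zz_def by (rule subgrad_C) (use H1a H1b e in auto)
    define B1 where "B1 = bregman h x xbar gb"
    define B2 where "B2 = bregman h xbar x g"
    have B2V: "B2 = V s" by (simp add: B2_def V_def x_def g_def zz_def)
    have hyp: "(U x - U xbar) \<bullet> (x - xbar) \<le> \<mu> * (B1 + B2)"
      using hypo g gb unfolding rel_hypo_monotone_def B1_def B2_def by blast
    have B1pos: "B1 \<ge> 0"
      using breg_strong[OF cK H2 gb xK' rho] unfolding B1_def
      by (smt (verit) rho zero_le_divide_iff zero_le_power2 mult_nonneg_nonneg)
    have ident: "(x - xbar) \<bullet> (U xbar - zz) = - \<epsilon> * (B1 + B2)"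
      using e unfolding B1_def B2_def bregman_def gb_def g_def
      by (simp add: inner_diff_left inner_diff_right inner_commute algebra_simps)
    have sp: "(U x - U xbar) \<bullet> (x - xbar) + (x - xbar) \<bullet> (U xbar - zz) = (x - xbar) \<bullet> (U x - zz)"
      by (simp add: inner_commute[of "U x - U xbar"] inner_add_right[symmetric])
    have "D s = \<gamma> / \<epsilon> * ((x - xbar) \<bullet> (U x - zz))"
      unfolding D_def zz_def[symmetric]
      by (simp add: inner_scaleR_right x_def zz_def)
    also have "\<dots> = \<gamma> / \<epsilon> * ((U x - U xbar) \<bullet> (x - xbar) + (x - xbar) \<bullet> (U xbar - zz))"
      by (simp only: sp)
    also have "\<dots> \<le> \<gamma> / \<epsilon> * (\<mu> * (B1 + B2) - \<epsilon> * (B1 + B2))"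
      using hyp ident gam e by (intro mult_left_mono) auto
    also have "\<dots> = \<gamma> / \<epsilon> * (\<mu> - \<epsilon>) * B1 + \<gamma> / \<epsilon> * (\<mu> - \<epsilon>) * B2"
      using e by (simp add: field_simps)
    also have "\<dots> \<le> \<gamma> / \<epsilon> * (\<mu> - \<epsilon>) * B2"
    proof -
      have "\<gamma> / \<epsilon> * (\<mu> - \<epsilon>) \<le> 0" using gam e em
        by (intro mult_nonneg_nonpos) auto
      then have "\<gamma> / \<epsilon> * (\<mu> - \<epsilon>) * B1 \<le> 0" using B1pos by (rule mult_nonpos_nonneg)
      then show ?thesis by linarith
    qed
    also have "\<dots> = - k * V s" using e by (simp add: k_def B2V field_simps)
    finally show ?thesis .
  qed
  define W where "W s = exp (k * s) * V s" for s
  have dW: "(W has_real_derivative (exp (k * s) * k * V s + exp (k * s) * D s)) (at s within {0..})"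
    if s: "s \<ge> 0" for s
  proof -
    show ?thesis
      unfolding W_def
      by (auto intro!: derivative_eq_intros dV[OF s] simp: algebra_simps)
  qed
  have dWn: "exp (k * s) * k * V s + exp (k * s) * D s \<le> 0" for s
  proof -
    have "exp (k * s) * (k * V s + D s) \<le> 0"
      using ineq[of s] by (intro mult_nonneg_nonpos) auto
    then show ?thesis by (simp add: algebra_simps)
  qed
  have "W t \<le> W 0"
  proof (rule DERIV_nonpos_imp_decreasing_open[OF t])
    fix x assume x: "0 < x" "x < t"
    have "x \<in> interior {0..}" using x by simp
    then have "at x within {0..} = at x" by (rule at_within_interior)
    then show "\<exists>y. DERIV W x :> y \<and> y \<le> 0"
      using dW[of x] dWn[of x] x by (metis less_imp_le)
  next
    show "continuous_on {0..t} W"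
      unfolding continuous_on_eq_continuous_within
    proof
      fix x assume "x \<in> {0..t}"
      then have "continuous (at x within {0..}) W" using dW[of x] DERIV_continuous by auto
      then show "continuous (at x within {0..t}) W"
        by (rule continuous_within_subset) auto
    qed
  qed
  then have "exp (k * t) * V t \<le> V 0" by (simp add: W_def)
  then have "V t \<le> exp (- (k * t)) * V 0"
    by (simp add: exp_minus field_simps)
  then show ?thesis by (simp add: V_def k_def)
qed



lemma usc_closed:
  fixes \<theta> :: "real^'c::finite \<Rightarrow> real"
  assumes cl: "closed \<Omega>" and sub: "\<And>c. closed {y\<in>\<Omega>. \<theta> y \<le> c}" and e: "\<epsilon> > 0"
  shows "closed {y\<in>\<Omega>. c \<le> y \<bullet> a - \<epsilon> * \<theta> y}"
  unfolding closed_sequential_limits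
proof (intro allI impI, elim conjE)
  fix x :: "nat \<Rightarrow> real^'c" and l
  assume xs: "\<forall>n. x n \<in> {y\<in>\<Omega>. c \<le> y \<bullet> a - \<epsilon> * \<theta> y}" and lim: "x \<longlonglongrightarrow> l"
  have lO: "l \<in> \<Omega>" using cl xs lim by (metis (no_types, lifting) closed_sequentially mem_Collect_eq)
  show "l \<in> {y\<in>\<Omega>. c \<le> y \<bullet> a - \<epsilon> * \<theta> y}"
  proof (rule ccontr)
    assume "l \<notin> {y\<in>\<Omega>. c \<le> y \<bullet> a - \<epsilon> * \<theta> y}"
    then have lt: "\<theta> l > (l \<bullet> a - c) / \<epsilon>" using lO e by (simp add: field_simps)
    define d where "d = \<theta> l - (l \<bullet> a - c) / \<epsilon>"
    have d: "d > 0" using lt by (simp add: d_def)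
    have la: "(\<lambda>n. x n \<bullet> a) \<longlonglongrightarrow> l \<bullet> a" by (intro tendsto_intros lim)
    then have ev: "\<forall>\<^sub>F n in sequentially. x n \<bullet> a < l \<bullet> a + \<epsilon> * d / 2"
      using d e by (intro order_tendstoD) auto
    have "\<forall>\<^sub>F n in sequentially. x n \<in> {y\<in>\<Omega>. \<theta> y \<le> \<theta> l - d / 2}"
      using ev
    proof eventually_elim
      case (elim n)
      have "c \<le> x n \<bullet> a - \<epsilon> * \<theta> (x n)" "x n \<in> \<Omega>" using xs by auto
      then have "\<epsilon> * \<theta> (x n) \<le> x n \<bullet> a - c" by simp
      also have "\<dots> < l \<bullet> a - c + \<epsilon> * d / 2" using elim by simp
      also have "\<dots> = \<epsilon> * (\<theta> l - d / 2)" using e by (simp add: d_def field_simps)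
      finally have "\<theta> (x n) < \<theta> l - d / 2" using e by simp
      then show ?case using \<open>x n \<in> \<Omega>\<close> by simp
    qed
    then have "l \<in> {y\<in>\<Omega>. \<theta> y \<le> \<theta> l - d / 2}"
      by (rule Lim_in_closed_set[OF sub _ _ lim]) simp
    then show False using d by simp
  qed
qed

lemma mirror_p_spec:
  fixes \<theta> :: "real^'c::finite \<Rightarrow> real"
  assumes cp: "compact \<Omega>" and cv: "convex \<Omega>" and ne: "\<Omega> \<noteq> {}"
    and reg: "regularizer \<Omega> \<theta> \<rho>" and rho: "\<rho> > 0" and e: "\<epsilon> > 0"
  shows "mirror_p \<Omega> \<theta> \<epsilon> a \<in> \<Omega> \<and>
    (\<forall>y'\<in>\<Omega>. y' \<bullet> a - \<epsilon> * \<theta> y' \<le> mirror_p \<Omega> \<theta> \<epsilon> a \<bullet> a - \<epsilon> * \<theta> (mirror_p \<Omega> \<theta> \<epsilon> a))"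
proof -
  define f where "f y = y \<bullet> a - \<epsilon> * \<theta> y" for y
  have sub: "\<And>c. closed {y\<in>\<Omega>. \<theta> y \<le> c}" and sc:
    "\<And>x y s. x\<in>\<Omega> \<Longrightarrow> y\<in>\<Omega> \<Longrightarrow> 0 \<le> s \<Longrightarrow> s \<le> 1 \<Longrightarrow>
        \<theta> (s *\<^sub>R x + (1 - s) *\<^sub>R y) \<le> s * \<theta> x + (1 - s) * \<theta> y - \<rho> / 2 * s * (1 - s) * (norm (x - y))\<^sup>2"
    using reg unfolding regularizer_def by blast+
  have cl: "closed \<Omega>" using cp by (rule compact_imp_closed)
  have "\<Omega> \<inter> (\<Inter>i\<in>\<Omega>. {y\<in>\<Omega>. f i \<le> f y}) \<noteq> {}"
  proof (rule compact_imp_fip_image[OF cp])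
    fix i assume "i \<in> \<Omega>"
    show "closed {y\<in>\<Omega>. f i \<le> f y}" unfolding f_def by (rule usc_closed[OF cl sub e])
  next
    fix I' assume fin: "finite I'" and sI: "I' \<subseteq> \<Omega>"
    show "\<Omega> \<inter> (\<Inter>i\<in>I'. {y\<in>\<Omega>. f i \<le> f y}) \<noteq> {}"
    proof (cases "I' = {}")
      case True then show ?thesis using ne by simp
    next
      case False
      obtain i0 where i0: "i0 \<in> I'" "f i0 = Max (f ` I')"
      proof -
        have "Max (f ` I') \<in> f ` I'" using fin False by (intro Max_in) auto
        then show ?thesis using that by auto
      qed
      have "i0 \<in> \<Omega> \<inter> (\<Inter>i\<in>I'. {y\<in>\<Omega>. f i \<le> f y})"
        using i0 sI fin by auto
      then show ?thesis by blast
    qed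
  qed
  then obtain y where y: "y \<in> \<Omega>" "\<And>i. i \<in> \<Omega> \<Longrightarrow> f i \<le> f y" by blast
  have uniq: "y2 = y" if y2: "y2 \<in> \<Omega>" "\<forall>i\<in>\<Omega>. f i \<le> f y2" for y2
  proof -
    define m where "m = (1/2) *\<^sub>R y + (1 - 1/2) *\<^sub>R y2"
    have mO: "m \<in> \<Omega>" unfolding m_def by (rule convexD[OF cv y(1) y2(1)]) auto
    have eq: "f y = f y2" using y y2 by (simp add: order_antisym)
    have th: "\<theta> m \<le> 1/2 * \<theta> y + (1 - 1/2) * \<theta> y2 - \<rho> / 2 * (1/2) * (1 - 1/2) * (norm (y - y2))\<^sup>2"
      unfolding m_def by (rule sc[OF y(1) y2(1)]) auto
    have fm: "f m = (f y + f y2) / 2 + \<epsilon> * ((\<theta> y + \<theta> y2) / 2 - \<theta> m)"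
      by (simp add: f_def m_def inner_add_left field_simps)
    have "f m \<le> f y" using y(2)[OF mO] .
    then have "\<epsilon> * ((\<theta> y + \<theta> y2) / 2 - \<theta> m) \<le> 0" using fm eq by simp
    then have "(\<theta> y + \<theta> y2) / 2 - \<theta> m \<le> 0" using e by (simp add: mult_le_0_iff)
    then have "\<rho> / 8 * (norm (y - y2))\<^sup>2 \<le> 0" using th by simp
    then have "(norm (y - y2))\<^sup>2 \<le> 0" using rho by (simp add: mult_le_0_iff)
    then show ?thesis by simp
  qed
  have ex1: "\<exists>!y. y \<in> \<Omega> \<and> (\<forall>y'\<in>\<Omega>. y' \<bullet> a - \<epsilon> * \<theta> y' \<le> y \<bullet> a - \<epsilon> * \<theta> y)"
    using y uniq unfolding f_def by blast
  show ?thesis unfolding mirror_p_def by (rule theI'[OF ex1])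
qed



lemma inner_split:
  fixes blk :: "'c::finite \<Rightarrow> 'p::finite"
  shows "x \<bullet> z = (\<Sum>p\<in>UNIV. proj_blk blk p x \<bullet> proj_blk blk p z)"
proof -
  have "(\<Sum>p\<in>UNIV. proj_blk blk p x \<bullet> proj_blk blk p z)
      = (\<Sum>p\<in>UNIV. \<Sum>i\<in>UNIV. if blk i = p then x $ i * z $ i else 0)"
    by (simp add: proj_blk_def inner_vec_def if_distrib cong: if_cong)
  also have "\<dots> = (\<Sum>i\<in>UNIV. \<Sum>p\<in>UNIV. if blk i = p then x $ i * z $ i else 0)"
    by (rule sum.swap)
  also have "\<dots> = (\<Sum>i\<in>UNIV. x $ i * z $ i)" by simp
  also have "\<dots> = x \<bullet> z" by (simp add: inner_vec_def)
  finally show ?thesis by simp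
qed

lemma proj_lin:
  "proj_blk blk p (s *\<^sub>R x + t *\<^sub>R y) = s *\<^sub>R proj_blk blk p x + t *\<^sub>R proj_blk blk p y"
  by (simp add: proj_blk_def vec_eq_iff)

lemma proj_diff: "proj_blk blk p (x - y) = proj_blk blk p x - proj_blk blk p y"
  by (simp add: proj_blk_def vec_eq_iff)

lemma proj_mirror:
  assumes bs: "\<And>p. \<Omega>p p \<subseteq> block_space blk p"
    and mem: "\<And>p a. mirror_p (\<Omega>p p) (\<theta> p) \<epsilon> a \<in> \<Omega>p p"
  shows "proj_blk blk p (mirror blk \<Omega>p \<theta> \<epsilon> z) = mirror_p (\<Omega>p p) (\<theta> p) \<epsilon> (proj_blk blk p z)"
proof -
  have "mirror_p (\<Omega>p p) (\<theta> p) \<epsilon> (proj_blk blk p z) $ i = 0" if "blk i \<noteq> p" for i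
    using mem[of p] bs[of p] that unfolding block_space_def by blast
  then show ?thesis
    unfolding proj_blk_def mirror_def by (auto simp: vec_eq_iff)
qed



theorem mainTheorem4:
  fixes blk :: "'c::finite \<Rightarrow> 'p::finite"
    and \<Omega>p :: "'p \<Rightarrow> (real^'c) set"
    and Upay :: "'p \<Rightarrow> real^'c \<Rightarrow> real"
    and U :: "real^'c \<Rightarrow> real^'c"
    and \<theta> :: "'p \<Rightarrow> real^'c \<Rightarrow> real"
    and L \<rho> \<epsilon> \<mu> \<gamma> :: real
    and xbar :: "real^'c"
    and z :: "real \<Rightarrow> real^'c"
  assumes blk_surj: "surj blk"
    and game: "concave_game blk \<Omega>p Upay U L"
    and reg: "\<And>p. regularizer (\<Omega>p p) (\<theta> p) \<rho>"
    and rho_pos: "\<rho> > 0"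
    and eps_pos: "\<epsilon> > 0"
    and hypo: "rel_hypo_monotone (joint_set blk \<Omega>p) (hsum blk \<theta>) U \<mu>"
    and xbar_int: "xbar \<in> rel_interior (joint_set blk \<Omega>p)"
    and xbar_ne: "xbar = mirror blk \<Omega>p \<theta> \<epsilon> (U xbar)"
    and xbar_unique: "\<And>y. y \<in> rel_interior (joint_set blk \<Omega>p) \<Longrightarrow>
                          y = mirror blk \<Omega>p \<theta> \<epsilon> (U y) \<Longrightarrow> y = xbar"
    and gamma_pos: "\<gamma> > 0"
    and eps_mu: "\<epsilon> > \<mu>"
    and ode: "\<And>t. t \<ge> 0 \<Longrightarrow>
       (z has_vector_derivative (\<gamma> *\<^sub>R (- z t + U (mirror blk \<Omega>p \<theta> \<epsilon> (z t))))) (at t within {0..})"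
  shows
    "((\<lambda>t. mirror blk \<Omega>p \<theta> \<epsilon> (z t)) \<longlongrightarrow> xbar) at_top
     \<and> (\<forall>t\<ge>0. bregman (hsum blk \<theta>) xbar (mirror blk \<Omega>p \<theta> \<epsilon> (z t)) ((1 / \<epsilon>) *\<^sub>R z t)
            \<le> exp (- \<gamma> * (\<epsilon> - \<mu>) / \<epsilon> * t)
              * bregman (hsum blk \<theta>) xbar (mirror blk \<Omega>p \<theta> \<epsilon> (z 0)) ((1 / \<epsilon>) *\<^sub>R z 0))
     \<and> (\<forall>t\<ge>0. (norm (xbar - mirror blk \<Omega>p \<theta> \<epsilon> (z t)))\<^sup>2
            \<le> 2 / \<rho> * exp (- \<gamma> * (\<epsilon> - \<mu>) / \<epsilon> * t)
              * bregman (hsum blk \<theta>) xbar (mirror blk \<Omega>p \<theta> \<epsilon> (z 0)) ((1 / \<epsilon>) *\<^sub>R z 0))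
     \<and> ((\<forall>x\<in>joint_set blk \<Omega>p. \<forall>x'\<in>joint_set blk \<Omega>p. (U x - U x') \<bullet> (x - x') = 0) \<longrightarrow>
        (\<forall>t\<ge>0. (norm (xbar - mirror blk \<Omega>p \<theta> \<epsilon> (z t)))\<^sup>2
            \<le> 2 / \<rho> * exp (- \<gamma> * t)
              * bregman (hsum blk \<theta>) xbar (mirror blk \<Omega>p \<theta> \<epsilon> (z 0)) ((1 / \<epsilon>) *\<^sub>R z 0)))"
proof -
  define K where "K = joint_set blk \<Omega>p"
  define h where "h = hsum blk \<theta>"
  define C where "C = mirror blk \<Omega>p \<theta> \<epsilon>"
  define M where "M p a = mirror_p (\<Omega>p p) (\<theta> p) \<epsilon> a" for p a
  have \<Omega>: "\<And>p. \<Omega>p p \<subseteq> block_space blk p \<and> \<Omega>p p \<noteq> {} \<and> compact (\<Omega>p p) \<and> convex (\<Omega>p p)"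
    using game unfolding concave_game_def by blast
  have spec: "M p a \<in> \<Omega>p p \<and> (\<forall>y'\<in>\<Omega>p p. y' \<bullet> a - \<epsilon> * \<theta> p y' \<le> M p a \<bullet> a - \<epsilon> * \<theta> p (M p a))" for p a
    unfolding M_def using \<Omega>[of p] reg[of p] rho_pos eps_pos by (intro mirror_p_spec) auto
  have pm: "proj_blk blk p (C w) = M p (proj_blk blk p w)" for p w
    unfolding C_def M_def by (rule proj_mirror) (use \<Omega> spec[unfolded M_def] in auto)
  have H1a: "C w \<in> K" for w
    unfolding K_def joint_set_def using pm spec by auto
  have H1b: "y \<bullet> w - \<epsilon> * h y \<le> C w \<bullet> w - \<epsilon> * h (C w)" if y: "y \<in> K" for w y
  proof -
    have yp: "proj_blk blk p y \<in> \<Omega>p p" for p using y by (simp add: K_def joint_set_def)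
    have "y \<bullet> w - \<epsilon> * h y = (\<Sum>p\<in>UNIV. proj_blk blk p y \<bullet> proj_blk blk p w - \<epsilon> * \<theta> p (proj_blk blk p y))"
      by (simp add: inner_split[of y w blk] h_def hsum_def sum_subtractf sum_distrib_left)
    also have "\<dots> \<le> (\<Sum>p\<in>UNIV. M p (proj_blk blk p w) \<bullet> proj_blk blk p w - \<epsilon> * \<theta> p (M p (proj_blk blk p w)))"
      by (rule sum_mono) (use spec yp in blast)
    also have "\<dots> = C w \<bullet> w - \<epsilon> * h (C w)"
      by (simp add: inner_split[of "C w" w blk] h_def hsum_def sum_subtractf sum_distrib_left pm)
    finally show ?thesis .
  qed
  have cK: "convex K"
    unfolding convex_def K_def joint_set_def
    using \<Omega> by (auto simp: proj_lin intro!: convexD)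
  have H2: "h (s *\<^sub>R x + (1 - s) *\<^sub>R y) \<le> s * h x + (1 - s) * h y - \<rho> / 2 * s * (1 - s) * (norm (x - y))\<^sup>2"
    if x: "x \<in> K" and y: "y \<in> K" and s: "0 \<le> s" "s \<le> 1" for x y s
  proof -
    have xp: "proj_blk blk p x \<in> \<Omega>p p" for p using x by (simp add: K_def joint_set_def)
    have yp: "proj_blk blk p y \<in> \<Omega>p p" for p using y by (simp add: K_def joint_set_def)
    have sc: "\<theta> p (s *\<^sub>R proj_blk blk p x + (1 - s) *\<^sub>R proj_blk blk p y)
       \<le> s * \<theta> p (proj_blk blk p x) + (1 - s) * \<theta> p (proj_blk blk p y)
         - \<rho> / 2 * s * (1 - s) * (norm (proj_blk blk p x - proj_blk blk p y))\<^sup>2" for p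
      using reg[of p] xp[of p] yp[of p] s unfolding regularizer_def by blast
    have nsplit: "(norm (x - y))\<^sup>2 = (\<Sum>p\<in>UNIV. (norm (proj_blk blk p x - proj_blk blk p y))\<^sup>2)"
      by (simp add: power2_norm_eq_inner inner_split[of "x - y" "x - y" blk] proj_diff)
    have "h (s *\<^sub>R x + (1 - s) *\<^sub>R y) = (\<Sum>p\<in>UNIV. \<theta> p (s *\<^sub>R proj_blk blk p x + (1 - s) *\<^sub>R proj_blk blk p y))"
      by (simp add: h_def hsum_def proj_lin)
    also have "\<dots> \<le> (\<Sum>p\<in>UNIV. s * \<theta> p (proj_blk blk p x) + (1 - s) * \<theta> p (proj_blk blk p y)
         - \<rho> / 2 * s * (1 - s) * (norm (proj_blk blk p x - proj_blk blk p y))\<^sup>2)"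
      by (rule sum_mono) (rule sc)
    also have "\<dots> = s * h x + (1 - s) * h y - \<rho> / 2 * s * (1 - s) * (norm (x - y))\<^sup>2"
      by (simp add: nsplit h_def hsum_def sum_subtractf sum.distrib sum_distrib_left)
    finally show ?thesis .
  qed
  have main: "bregman h xbar (C (z t)) ((1/\<epsilon>) *\<^sub>R z t)
     \<le> exp (- \<gamma> * (\<epsilon> - \<mu>') / \<epsilon> * t) * bregman h xbar (C (z 0)) ((1/\<epsilon>) *\<^sub>R z 0)"
    if t: "t \<ge> 0" and em': "\<epsilon> > \<mu>'" and hy': "rel_hypo_monotone K h U \<mu>'" for t \<mu>'
    by (rule abstract_main[OF cK H1a H1b H2 rho_pos eps_pos gamma_pos em' hy' xbar_ne[folded C_def] ode[folded C_def] t])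
  have xK: "xbar \<in> K" using H1a xbar_ne[folded C_def] by metis
  have nb: "(norm (xbar - C (z t)))\<^sup>2 \<le> 2 / \<rho> * bregman h xbar (C (z t)) ((1/\<epsilon>) *\<^sub>R z t)" for t
  proof -
    have g: "(1/\<epsilon>) *\<^sub>R z t \<in> subgrad K h (C (z t))"
      by (rule subgrad_C) (use H1a H1b eps_pos in auto)
    have "\<rho>/2 * (norm (xbar - C (z t)))\<^sup>2 \<le> bregman h xbar (C (z t)) ((1/\<epsilon>) *\<^sub>R z t)"
      by (rule breg_strong[OF cK H2 g xK rho_pos])
    then show ?thesis using rho_pos by (simp add: field_simps)
  qed
  define B0 where "B0 = bregman h xbar (C (z 0)) ((1/\<epsilon>) *\<^sub>R z 0)"
  have P2: "\<forall>t\<ge>0. bregman h xbar (C (z t)) ((1/\<epsilon>) *\<^sub>R z t) \<le> exp (- \<gamma> * (\<epsilon> - \<mu>) / \<epsilon> * t) * B0"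
    using main[OF _ eps_mu hypo[folded K_def h_def]] by (simp add: B0_def)
  have P3: "\<forall>t\<ge>0. (norm (xbar - C (z t)))\<^sup>2 \<le> 2 / \<rho> * exp (- \<gamma> * (\<epsilon> - \<mu>) / \<epsilon> * t) * B0"
  proof (intro allI impI)
    fix t :: real assume t: "t \<ge> 0"
    have "(norm (xbar - C (z t)))\<^sup>2 \<le> 2 / \<rho> * bregman h xbar (C (z t)) ((1/\<epsilon>) *\<^sub>R z t)" by (rule nb)
    also have "\<dots> \<le> 2 / \<rho> * (exp (- \<gamma> * (\<epsilon> - \<mu>) / \<epsilon> * t) * B0)"
      using P2 t rho_pos by (intro mult_left_mono) auto
    finally show "(norm (xbar - C (z t)))\<^sup>2 \<le> 2 / \<rho> * exp (- \<gamma> * (\<epsilon> - \<mu>) / \<epsilon> * t) * B0"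
      by (simp add: mult.assoc)
  qed
  have P4: "(\<forall>x\<in>K. \<forall>x'\<in>K. (U x - U x') \<bullet> (x - x') = 0) \<longrightarrow>
        (\<forall>t\<ge>0. (norm (xbar - C (z t)))\<^sup>2 \<le> 2 / \<rho> * exp (- \<gamma> * t) * B0)"
  proof (intro impI allI)
    assume nm: "\<forall>x\<in>K. \<forall>x'\<in>K. (U x - U x') \<bullet> (x - x') = 0"
    have hy0: "rel_hypo_monotone K h U 0"
      unfolding rel_hypo_monotone_def subgrad_def using nm by auto
    fix t :: real assume t: "t \<ge> 0"
    have "(norm (xbar - C (z t)))\<^sup>2 \<le> 2 / \<rho> * bregman h xbar (C (z t)) ((1/\<epsilon>) *\<^sub>R z t)" by (rule nb)
    also have "\<dots> \<le> 2 / \<rho> * (exp (- \<gamma> * (\<epsilon> - 0) / \<epsilon> * t) * B0)"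
      using main[OF t eps_pos hy0] rho_pos by (intro mult_left_mono) (auto simp: B0_def)
    finally show "(norm (xbar - C (z t)))\<^sup>2 \<le> 2 / \<rho> * exp (- \<gamma> * t) * B0"
      using eps_pos by (simp add: mult.assoc)
  qed
  define k where "k = \<gamma> * (\<epsilon> - \<mu>) / \<epsilon>"
  have kpos: "k > 0" using gamma_pos eps_mu eps_pos by (simp add: k_def)
  have P1: "((\<lambda>t. C (z t)) \<longlongrightarrow> xbar) at_top"
  proof -
    define g where "g t = sqrt (2 / \<rho> * exp (- k * t) * B0)" for t
    have lim1: "filterlim (\<lambda>t::real. - k * t) at_bot at_top"
    proof -
      have "filterlim (\<lambda>t::real. k * t) at_top at_top"
        using kpos by (intro filterlim_tendsto_pos_mult_at_top[OF tendsto_const] filterlim_ident) auto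
      then show ?thesis using filterlim_uminus_at_bot by fastforce
    qed
    have e0: "((\<lambda>t. exp (- k * t)) \<longlongrightarrow> 0) at_top"
      using filterlim_compose[OF exp_at_bot lim1] by simp
    have "((\<lambda>t. 2 / \<rho> * exp (- k * t) * B0) \<longlongrightarrow> 2 / \<rho> * 0 * B0) at_top"
      by (intro tendsto_mult tendsto_const e0)
    then have "(g \<longlongrightarrow> sqrt (2 / \<rho> * 0 * B0)) at_top"
      unfolding g_def by (rule tendsto_real_sqrt)
    then have g0: "(g \<longlongrightarrow> 0) at_top" by simp
    have "((\<lambda>t. C (z t) - xbar) \<longlongrightarrow> 0) at_top"
    proof (rule Lim_null_comparison[OF _ g0])
      show "\<forall>\<^sub>F t in at_top. norm (C (z t) - xbar) \<le> g t"
        using eventually_ge_at_top[of "0::real"]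
      proof eventually_elim
        case (elim t)
        have "(norm (C (z t) - xbar))\<^sup>2 \<le> 2 / \<rho> * exp (- k * t) * B0"
          using P3 elim by (simp add: k_def norm_minus_commute)
        then show ?case unfolding g_def by (rule real_le_rsqrt)
      qed
    qed
    then show ?thesis by (rule LIM_zero_cancel)
  qed
  show ?thesis
    using P1 P2 P3 P4 unfolding K_def h_def C_def B0_def by blast
qed


end
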